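(* Let $b_0$ satisfy conditions (C1) and (C2), and let $b$ be the solution of problem (P) on $[0,T)$. Then $$\chi_d\Theta\, b_r(r,t)^2\le \frac23\, b(0,t)^3\quad\text{for all }(r,t)\in D_T.$$
   Context: Fix $d>2$, $\Theta>0$; $\chi_d$ is the volume of the unit ball in $\mathbb R^d$, $D=(0,1)$, $D_T=D\times(0,T)$. Problem (P): $b_t=\chi_d\Theta\big(b_{rr}+\frac{d+1}{r}b_r\big)+\frac1d r b b_r+b^2$ in $D_T$, $b_r(0,t)=0$, $b(1,t)=1$, $b(r,0)=b_0(r)$, where $b_0\in C^2([0,1])$ with $\frac rd b_0'+b_0\ge0$ on $D$; $b$ is the classical solution on its maximal existence interval $[0,T)$. Condition (C1): $b_0'(r)\le 0$ for $r\in D$. Condition (C2): $\chi_d\Theta\big(b_0''+\frac{d+1}{r}b_0'\big)+\frac1d r b_0 b_0'+b_0^2\ge 0$ for $r\in D$. *)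

theory Defs
  imports "HOL-Analysis.Analysis"
begin

definition chi :: "nat \<Rightarrow> real" where
  "chi d = unit_ball_vol (real d)"

definition C2_01 :: "(real \<Rightarrow> real) \<Rightarrow> bool" where
  "C2_01 f \<longleftrightarrow> (\<exists>f1 f2.
      (\<forall>r\<in>{0..1}. (f has_real_derivative f1 r) (at r within {0..1})) \<and>
      (\<forall>r\<in>{0..1}. (f1 has_real_derivative f2 r) (at r within {0..1})) \<and>
      continuous_on {0..1} f2)"

definition classical_solution ::
  "nat \<Rightarrow> real \<Rightarrow> (real \<Rightarrow> real) \<Rightarrow> real \<Rightarrow> (real \<Rightarrow> real \<Rightarrow> real) \<Rightarrow> bool" where
  "classical_solution d \<Theta> b0 T b \<longleftrightarrow>
     continuous_on ({0..1} \<times> {0..<T}) (\<lambda>(r,t). b r t) \<and>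
     (\<exists>br brr bt.
        (\<forall>t\<in>{0<..<T}. \<forall>r\<in>{0..<1}.
            ((\<lambda>s. b s t) has_real_derivative br r t) (at r within {0..1})) \<and>
        continuous_on ({0..<1} \<times> {0<..<T}) (\<lambda>(r,t). br r t) \<and>
        (\<forall>t\<in>{0<..<T}. \<forall>r\<in>{0<..<1}.
            ((\<lambda>s. br s t) has_real_derivative brr r t) (at r) \<and>
            ((\<lambda>\<tau>. b r \<tau>) has_real_derivative bt r t) (at t)) \<and>
        continuous_on ({0<..<1} \<times> {0<..<T}) (\<lambda>(r,t). brr r t) \<and>
        continuous_on ({0<..<1} \<times> {0<..<T}) (\<lambda>(r,t). bt r t) \<and>
        (\<forall>t\<in>{0<..<T}. \<forall>r\<in>{0<..<1}.
            bt r t = chi d * \<Theta> * (brr r t + (real d + 1) / r * br r t)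
                     + (1 / real d) * r * b r t * br r t + (b r t)\<^sup>2) \<and>
        (\<forall>t\<in>{0<..<T}. br 0 t = 0)) \<and>
     (\<forall>t\<in>{0..<T}. b 1 t = 1) \<and>
     (\<forall>r\<in>{0..1}. b r 0 = b0 r)"

end

theory Submission
  imports Defs
begin

lemma bound_compact:
  fixes f :: "'a::metric_space \<Rightarrow> real"
  assumes "compact S" "continuous_on S f"
  shows "\<exists>B. \<forall>x\<in>S. \<bar>f x\<bar> \<le> B"
proof -
  have "bounded (f ` S)" using assms compact_continuous_image compact_imp_bounded by blast
  then show ?thesis unfolding bounded_real by auto
qed

lemma deriv_at_interior:
  fixes f :: "real \<Rightarrow> real"
  assumes "(f has_real_derivative l) (at r within {0..1})" "0 < r" "r < 1"
  shows "(f has_real_derivative l) (at r)"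
proof -
  have "r \<in> interior {0..1::real}" using assms by simp
  then show ?thesis using assms(1) at_within_interior by metis
qed

lemma left_max_deriv:
  fixes g :: "real \<Rightarrow> real"
  assumes "(g has_real_derivative l) (at t)" "\<delta> > 0" "\<forall>s. t - \<delta> < s \<and> s < t \<longrightarrow> g s \<le> g t"
  shows "l \<ge> 0"
proof (rule ccontr)
  assume "\<not> l \<ge> 0"
  then have "l < 0" by simp
  from DERIV_neg_dec_left[OF assms(1) this] obtain d where d: "d > 0" "\<forall>h>0. h < d \<longrightarrow> g t < g (t - h)" by blast
  define h where "h = min d \<delta> / 2"
  have "h > 0" "h < d" "h < \<delta>" using d assms(2) by (auto simp: h_def)
  then have "g t < g (t - h)" using d by auto
  moreover have "g (t - h) \<le> g t" using assms(3) \<open>h>0\<close> \<open>h<\<delta>\<close> by auto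
  ultimately show False by simp
qed

lemma right_pos_within0:
  fixes f :: "real \<Rightarrow> real"
  assumes "(f has_real_derivative l) (at 0 within {0..1})" "l > 0"
  shows "\<exists>h. 0 < h \<and> h \<le> 1 \<and> f h > f 0"
proof -
  from has_real_derivative_pos_inc_right[OF assms]
  obtain d where d: "d > 0" "\<forall>h>0. 0 + h \<in> {0..1} \<longrightarrow> h < d \<longrightarrow> f 0 < f (0 + h)" by blast
  define h where "h = min d 1 / 2"
  have "h > 0" "h < d" "h \<le> 1" using d by (auto simp: h_def)
  then show ?thesis using d by (intro exI[of _ h]) auto
qed

lemma second_deriv_max:
  fixes f f' :: "real \<Rightarrow> real"
  assumes "a < x" "x < b" "\<forall>y. a < y \<and> y < b \<longrightarrow> f y \<le> f x"
    "\<forall>y. a < y \<and> y < b \<longrightarrow> (f has_real_derivative f' y) (at y)"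
    "(f' has_real_derivative l) (at x)"
  shows "f' x = 0 \<and> l \<le> 0"
proof -
  have d: "f' x = 0"
  proof (rule DERIV_local_max[of f "f' x" x "min (x - a) (b - x)"])
    show "(f has_real_derivative f' x) (at x)" using assms by auto
    show "0 < min (x - a) (b - x)" using assms by auto
    show "\<forall>y. \<bar>x - y\<bar> < min (x - a) (b - x) \<longrightarrow> f y \<le> f x" proof (intro allI impI)
      fix y assume "\<bar>x - y\<bar> < min (x - a) (b - x)"
      then have "a < y \<and> y < b" by (auto simp: abs_if split: if_splits)
      then show "f y \<le> f x" using assms(3) by blast
    qed
  qed
  moreover have "l \<le> 0"
  proof (rule ccontr)
    assume "\<not> l \<le> 0"
    then have "l > 0" by simp
    from DERIV_pos_inc_right[OF assms(5) this] obtain e where e: "e > 0" "\<forall>h>0. h < e \<longrightarrow> f' x < f' (x + h)" by blast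
    define h where "h = min e (b - x) / 2"
    have h: "h > 0" "h < e" "x + h < b" using e assms unfolding h_def by (auto simp: min_def field_simps)
    have "\<exists>z>x. z < x + h \<and> f (x + h) - f x = (x + h - x) * f' z"
      by (rule MVT2) (use h assms in auto)
    then obtain z where z: "z > x" "z < x + h" "f (x + h) - f x = h * f' z" by auto
    have "f' z > 0" using e(2)[rule_format, of "z - x"] z h d by auto
    then have "f (x + h) > f x" using z h by (metis diff_gt_0_iff_gt mult_pos_pos)
    moreover have "f (x + h) \<le> f x" using assms(3) h assms(1) by auto
    ultimately show False by simp
  qed
  ultimately show ?thesis by simp
qed

lemma maxprin1:
  fixes w wr wrr wt :: "real \<Rightarrow> real \<Rightarrow> real" and t1 C K :: real
  assumes t1: "t1 \<ge> 0"
    and cont: "continuous_on ({0..1} \<times> {0..t1}) (\<lambda>(r,t). w r t)"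
    and init: "\<forall>r\<in>{0..1}. w r 0 \<le> 0"
    and bdry: "\<forall>t\<in>{0..t1}. w 1 t \<le> 0"
    and d0: "\<forall>t\<in>{0<..t1}. ((\<lambda>r. w r t) has_real_derivative wr 0 t) (at 0 within {0..1}) \<and> wr 0 t \<ge> 0"
    and dr: "\<forall>t\<in>{0<..t1}. \<forall>r\<in>{0<..<1}. ((\<lambda>r. w r t) has_real_derivative wr r t) (at r)
               \<and> ((\<lambda>r. wr r t) has_real_derivative wrr r t) (at r)
               \<and> ((\<lambda>\<tau>. w r \<tau>) has_real_derivative wt r t) (at t)"
    and ineq: "\<forall>t\<in>{0<..t1}. \<forall>r\<in>{0<..<1}. w r t > 0 \<longrightarrow> wr r t \<le> 0 \<longrightarrow> wrr r t \<le> 0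
               \<longrightarrow> wt r t \<le> C * w r t + K * \<bar>wr r t\<bar>"
  shows "\<forall>r\<in>{0..1}. \<forall>t\<in>{0..t1}. w r t \<le> 0"
proof -
  define lam where "lam = \<bar>C\<bar> + \<bar>K\<bar> + 1"
  have main: "exp (- lam * t) * w r t + \<epsilon> * r \<le> 2 * \<epsilon>"
    if \<epsilon>: "\<epsilon> > 0" and rt: "r \<in> {0..1}" "t \<in> {0..t1}" for \<epsilon> r t
  proof -
    define W where "W = (\<lambda>p::real\<times>real. exp (- lam * snd p) * w (fst p) (snd p) + \<epsilon> * fst p)"
    let ?S = "{0..1::real} \<times> {0..t1}"
    have cS: "compact ?S" by (simp add: compact_Times)
    have nS: "?S \<noteq> {}" using t1 by auto
    have cw: "continuous_on ?S (\<lambda>p. w (fst p) (snd p))"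
      using cont by (simp add: case_prod_beta')
    have "continuous_on ?S W" unfolding W_def
      by (intro continuous_intros cw)
    from continuous_attains_sup[OF cS nS this] obtain p where p: "p \<in> ?S" "\<forall>q\<in>?S. W q \<le> W p" by blast
    obtain rs ts where pe: "p = (rs, ts)" by (cases p)
    have rs: "0 \<le> rs" "rs \<le> 1" and ts: "0 \<le> ts" "ts \<le> t1" using p pe by auto
    have Wp: "W p \<le> 2 * \<epsilon>"
    proof (rule ccontr)
      assume M: "\<not> W p \<le> 2 * \<epsilon>"
      define E where "E = exp (- lam * ts)"
      have E: "E > 0" by (simp add: E_def)
      have WP: "W p = E * w rs ts + \<epsilon> * rs" by (simp add: W_def pe E_def)
      have ts0: "ts > 0"
      proof (rule ccontr)
        assume "\<not> ts > 0" then have "ts = 0" using ts by simp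
        then have "W p = w rs 0 + \<epsilon> * rs" by (simp add: W_def pe)
        moreover have "w rs 0 \<le> 0" using init rs by auto
        moreover have "\<epsilon> * rs \<le> \<epsilon>" using rs \<epsilon> by (simp add: mult_left_le)
        ultimately show False using M \<epsilon> by linarith
      qed
      have rs1: "rs < 1"
      proof (rule ccontr)
        assume "\<not> rs < 1" then have "rs = 1" using rs by simp
        then have "W p = E * w 1 ts + \<epsilon>" using WP by simp
        moreover have "E * w 1 ts \<le> 0" using bdry ts E by (simp add: mult_nonneg_nonpos)
        ultimately show False using M \<epsilon> by linarith
      qed
      have tsI: "ts \<in> {0<..t1}" using ts0 ts by simp
      have rs0: "rs > 0"
      proof (rule ccontr)
        assume "\<not> rs > 0" then have rz: "rs = 0" using rs by simp
        have "((\<lambda>r. W (r, ts)) has_real_derivative (E * wr 0 ts + \<epsilon>)) (at 0 within {0..1})"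
          unfolding W_def E_def using d0 tsI
          by (auto intro!: derivative_eq_intros)
        moreover have "E * wr 0 ts + \<epsilon> > 0" using d0 tsI E \<epsilon>
          by (simp add: add_nonneg_pos)
        ultimately obtain h where h: "0 < h" "h \<le> 1" "W (h, ts) > W (0, ts)"
          using right_pos_within0 by blast
        then have "(h, ts) \<in> ?S" using ts by auto
        then have "W (h, ts) \<le> W p" using p(2) by blast
        then show False using h pe rz by simp
      qed
      have rsI: "rs \<in> {0<..<1}" using rs0 rs1 by simp
      have sp: "(\<lambda>r. E * wr r ts + \<epsilon>) rs = 0 \<and> E * wrr rs ts \<le> 0"
      proof (rule second_deriv_max[of 0 rs 1 "\<lambda>r. W (r, ts)"])
        show "0 < rs" "rs < 1" using rsI by auto
        show "\<forall>y. 0 < y \<and> y < 1 \<longrightarrow> W (y, ts) \<le> W (rs, ts)"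
          using p(2) ts pe by auto
        show "\<forall>y. 0 < y \<and> y < 1 \<longrightarrow> ((\<lambda>r. W (r, ts)) has_real_derivative E * wr y ts + \<epsilon>) (at y)"
          unfolding W_def E_def using dr tsI
          by (auto intro!: derivative_eq_intros)
        show "((\<lambda>r. E * wr r ts + \<epsilon>) has_real_derivative E * wrr rs ts) (at rs)"
          using dr tsI rsI by (auto intro!: derivative_eq_intros)
      qed
      have tm: "E * (- lam) * w rs ts + E * wt rs ts \<ge> 0"
      proof (rule left_max_deriv[of "\<lambda>t. W (rs, t)" _ ts ts])
        show "((\<lambda>t. W (rs, t)) has_real_derivative E * (- lam) * w rs ts + E * wt rs ts) (at ts)"
          unfolding W_def E_def using dr tsI rsI
          by (auto intro!: derivative_eq_intros simp: algebra_simps)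
        show "0 < ts" by (rule ts0)
        show "\<forall>s. ts - ts < s \<and> s < ts \<longrightarrow> W (rs, s) \<le> W (rs, ts)"
          using p(2) ts rs pe by auto
      qed
      have wr_eq: "wr rs ts = - \<epsilon> / E" using sp E by (simp add: field_simps)
      have wrr: "wrr rs ts \<le> 0" using sp E by (simp add: mult_le_0_iff)
      have "E * (wt rs ts - lam * w rs ts) \<ge> 0" using tm by (simp add: algebra_simps)
      then have "wt rs ts - lam * w rs ts \<ge> 0" using E by (simp add: zero_le_mult_iff)
      then have wt: "wt rs ts \<ge> lam * w rs ts" by simp
      have "E * w rs ts > \<epsilon>"
      proof -
        have "\<epsilon> * rs \<le> \<epsilon>" using rs \<epsilon> by (simp add: mult_left_le)
        then show ?thesis using M WP by linarith
      qed
      then have wgt: "w rs ts > \<epsilon> / E" using E by (simp add: field_simps)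
      have wpos: "w rs ts > 0" using wgt \<epsilon> E by (smt (verit) divide_pos_pos)
      have abswr: "\<bar>wr rs ts\<bar> = \<epsilon> / E" using wr_eq \<epsilon> E by simp
      have wrneg: "wr rs ts \<le> 0" using wr_eq \<epsilon> E by simp
      have "wt rs ts \<le> C * w rs ts + K * \<bar>wr rs ts\<bar>"
        using ineq tsI rsI wpos wrneg wrr by blast
      also have "\<dots> \<le> \<bar>C\<bar> * w rs ts + \<bar>K\<bar> * w rs ts"
      proof -
        have "C * w rs ts \<le> \<bar>C\<bar> * w rs ts" using wpos by (simp add: mult_right_mono)
        moreover have "K * \<bar>wr rs ts\<bar> \<le> \<bar>K\<bar> * w rs ts"
        proof -
          have "K * \<bar>wr rs ts\<bar> \<le> \<bar>K\<bar> * \<bar>wr rs ts\<bar>" by (simp add: mult_right_mono)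
          also have "\<dots> \<le> \<bar>K\<bar> * w rs ts" using abswr wgt by (intro mult_left_mono) auto
          finally show ?thesis .
        qed
        ultimately show ?thesis by linarith
      qed
      finally have "lam * w rs ts \<le> (\<bar>C\<bar> + \<bar>K\<bar>) * w rs ts" using wt by (simp add: algebra_simps)
      then show False using wpos unfolding lam_def by (simp add: algebra_simps)
    qed
    have "(r, t) \<in> ?S" using rt by auto
    then have "W (r, t) \<le> W p" using p(2) by blast
    then have "W (r, t) \<le> 2 * \<epsilon>" using Wp by linarith
    then show ?thesis by (simp add: W_def)
  qed
  show ?thesis
  proof (intro ballI)
    fix r t assume rt: "r \<in> {0..1::real}" "t \<in> {0..t1}"
    show "w r t \<le> 0"
    proof (rule ccontr)
      assume "\<not> w r t \<le> 0"
      then have wp: "w r t > 0" by simp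
      define E where "E = exp (- lam * t)"
      have E: "E > 0" by (simp add: E_def)
      define \<epsilon> where "\<epsilon> = E * w r t / 4"
      have ep: "\<epsilon> > 0" using E wp by (simp add: \<epsilon>_def)
      have "E * w r t + \<epsilon> * r \<le> 2 * \<epsilon>" using main[OF ep rt] by (simp add: E_def)
      moreover have "\<epsilon> * r \<ge> 0" using ep rt by simp
      ultimately show False using ep unfolding \<epsilon>_def by linarith
    qed
  qed
qed

lemma right_pos_within0c:
  fixes f :: "real \<Rightarrow> real"
  assumes "(f has_real_derivative l) (at 0 within {0..1})" "l > 0" "c > 0"
  shows "\<exists>h. 0 < h \<and> h \<le> c \<and> h \<le> 1 \<and> f h > f 0"
proof -
  from has_real_derivative_pos_inc_right[OF assms(1,2)]
  obtain d where d: "d > 0" "\<forall>h>0. 0 + h \<in> {0..1} \<longrightarrow> h < d \<longrightarrow> f 0 < f (0 + h)" by blast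
  define h where "h = min (min d 1) c / 2"
  have "h > 0" "h < d" "h \<le> 1" "h \<le> c" using d assms(3) unfolding h_def by (auto simp: min_def)
  then show ?thesis using d by (intro exI[of _ h]) auto
qed

lemma maxprin2:
  fixes u ur urr ut :: "real \<Rightarrow> real \<Rightarrow> real" and t1 K :: real
  assumes t1: "t1 \<ge> 0"
    and cont: "continuous_on ({0..1} \<times> {0..t1}) (\<lambda>(r,t). u r t)"
    and init: "\<forall>r s. 0 \<le> s \<and> s \<le> r \<and> r \<le> 1 \<longrightarrow> u r 0 \<le> u s 0"
    and bdry: "\<forall>t\<in>{0..t1}. \<forall>s\<in>{0..1}. u 1 t \<le> u s t"
    and d0: "\<forall>t\<in>{0<..t1}. ((\<lambda>r. u r t) has_real_derivative ur 0 t) (at 0 within {0..1}) \<and> ur 0 t = 0"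
    and dr: "\<forall>t\<in>{0<..t1}. \<forall>r\<in>{0<..<1}. ((\<lambda>r. u r t) has_real_derivative ur r t) (at r)
               \<and> ((\<lambda>r. ur r t) has_real_derivative urr r t) (at r)
               \<and> ((\<lambda>\<tau>. u r \<tau>) has_real_derivative ut r t) (at t)"
    and ineq: "\<forall>t\<in>{0<..t1}. \<forall>r s. 0 < s \<and> s < r \<and> r < 1 \<longrightarrow> u r t > u s t \<longrightarrow>
               ur r t = 0 \<longrightarrow> urr r t \<le> 0 \<longrightarrow> ur s t > 0 \<longrightarrow> urr s t \<ge> 0 \<longrightarrow>
               ut r t - ut s t \<le> K * (u r t - u s t)"
  shows "\<forall>t\<in>{0..t1}. \<forall>r s. 0 \<le> s \<and> s \<le> r \<and> r \<le> 1 \<longrightarrow> u r t \<le> u s t"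
proof -
  define lam where "lam = \<bar>K\<bar> + 1"
  let ?T = "{p::real\<times>real. 0 \<le> snd p \<and> snd p \<le> fst p \<and> fst p \<le> 1}"
  let ?S = "?T \<times> {0..t1}"
  have cT: "compact ?T"
  proof -
    have eq: "?T = ({0..1} \<times> {0..1}) \<inter> {p. snd p \<le> fst p}" by auto
    have "closed {p::real\<times>real. snd p \<le> fst p}"
      by (intro closed_Collect_le continuous_intros)
    then show ?thesis unfolding eq by (intro compact_Int_closed compact_Times) auto
  qed
  have cS: "compact ?S" using cT by (simp add: compact_Times)
  have nS: "?S \<noteq> {}" using t1 by force
  have main: "exp (- lam * t) * (u r t - u s t) + \<epsilon> * s \<le> \<epsilon>"
    if \<epsilon>: "\<epsilon> > 0" and rt: "0 \<le> s" "s \<le> r" "r \<le> 1" "t \<in> {0..t1}" for \<epsilon> r s t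
  proof -
    define W where "W = (\<lambda>p::(real\<times>real)\<times>real. exp (- lam * snd p) *
         (u (fst (fst p)) (snd p) - u (snd (fst p)) (snd p)) + \<epsilon> * snd (fst p))"
    have cu: "continuous_on ({0..1} \<times> {0..t1}) (\<lambda>p. u (fst p) (snd p))"
      using cont by (simp add: case_prod_beta')
    have c1: "continuous_on ?S (\<lambda>p. u (fst (fst p)) (snd p))"
    proof -
      have "continuous_on ?S ((\<lambda>p. u (fst p) (snd p)) \<circ> (\<lambda>p. (fst (fst p), snd p)))"
        by (intro continuous_on_compose continuous_intros continuous_on_subset[OF cu]) auto
      then show ?thesis by (simp add: o_def)
    qed
    have c2: "continuous_on ?S (\<lambda>p. u (snd (fst p)) (snd p))"
    proof -
      have "continuous_on ?S ((\<lambda>p. u (fst p) (snd p)) \<circ> (\<lambda>p. (snd (fst p), snd p)))"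
        by (intro continuous_on_compose continuous_intros continuous_on_subset[OF cu]) auto
      then show ?thesis by (simp add: o_def)
    qed
    have "continuous_on ?S W" unfolding W_def
      by (intro continuous_intros c1 c2)
    from continuous_attains_sup[OF cS nS this] obtain p where p: "p \<in> ?S" "\<forall>q\<in>?S. W q \<le> W p" by blast
    obtain rs ss ts where pe: "p = ((rs, ss), ts)" by (metis prod.collapse)
    have rs: "0 \<le> ss" "ss \<le> rs" "rs \<le> 1" and ts: "0 \<le> ts" "ts \<le> t1" using p pe by auto
    have Wp: "W p \<le> \<epsilon>"
    proof (rule ccontr)
      assume M: "\<not> W p \<le> \<epsilon>"
      define E where "E = exp (- lam * ts)"
      have E: "E > 0" by (simp add: E_def)
      have WP: "W p = E * (u rs ts - u ss ts) + \<epsilon> * ss" by (simp add: W_def pe E_def)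
      have sle: "\<epsilon> * ss \<le> \<epsilon>" using rs \<epsilon> by (simp add: mult_left_le)
      have ts0: "ts > 0"
      proof (rule ccontr)
        assume "\<not> ts > 0" then have "ts = 0" using ts by simp
        then have "W p = u rs 0 - u ss 0 + \<epsilon> * ss" by (simp add: W_def pe)
        moreover have "u rs 0 \<le> u ss 0" using init rs by auto
        ultimately show False using M sle by linarith
      qed
      have rs1: "rs < 1"
      proof (rule ccontr)
        assume "\<not> rs < 1" then have "rs = 1" using rs by simp
        then have "W p = E * (u 1 ts - u ss ts) + \<epsilon> * ss" using WP by simp
        moreover have "E * (u 1 ts - u ss ts) \<le> 0" using bdry ts E rs
          by (simp add: mult_nonneg_nonpos)
        ultimately show False using M sle by linarith
      qed
      have ssr: "ss < rs"
      proof (rule ccontr)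
        assume "\<not> ss < rs" then have "ss = rs" using rs by simp
        then have "W p = \<epsilon> * ss" using WP by simp
        then show False using M sle by linarith
      qed
      have tsI: "ts \<in> {0<..t1}" using ts0 ts by simp
      have ss0: "ss > 0"
      proof (rule ccontr)
        assume "\<not> ss > 0" then have sz: "ss = 0" using rs by simp
        have "((\<lambda>s. W ((rs, s), ts)) has_real_derivative (E * (- ur 0 ts) + \<epsilon>)) (at 0 within {0..1})"
          unfolding W_def E_def using d0 tsI
          by (auto intro!: derivative_eq_intros)
        moreover have "E * (- ur 0 ts) + \<epsilon> > 0" using d0 tsI E \<epsilon> by simp
        moreover have "rs > 0" using ssr sz by simp
        ultimately obtain h where h: "0 < h" "h \<le> rs" "h \<le> 1" "W ((rs, h), ts) > W ((rs, 0), ts)"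
          using right_pos_within0c by blast
        then have "((rs, h), ts) \<in> ?S" using ts rs by auto
        then have "W ((rs, h), ts) \<le> W p" using p(2) by blast
        then show False using h pe sz by simp
      qed
      have rsI: "rs \<in> {0<..<1}" using ss0 ssr rs1 by simp
      have ssI: "ss \<in> {0<..<1}" using ss0 ssr rs1 by simp
      have spr: "(\<lambda>r. E * ur r ts) rs = 0 \<and> E * urr rs ts \<le> 0"
      proof (rule second_deriv_max[of ss rs 1 "\<lambda>r. W ((r, ss), ts)"])
        show "ss < rs" "rs < 1" using ssr rs1 by auto
        show "\<forall>y. ss < y \<and> y < 1 \<longrightarrow> W ((y, ss), ts) \<le> W ((rs, ss), ts)"
        proof (intro allI impI)
          fix y assume "ss < y \<and> y < 1"
          then have "((y, ss), ts) \<in> ?S" using ts rs by auto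
          then show "W ((y, ss), ts) \<le> W ((rs, ss), ts)" using p(2) pe by blast
        qed
        show "\<forall>y. ss < y \<and> y < 1 \<longrightarrow> ((\<lambda>r. W ((r, ss), ts)) has_real_derivative E * ur y ts) (at y)"
        proof (intro allI impI)
          fix y assume y: "ss < y \<and> y < 1"
          then have "y \<in> {0<..<1}" using ss0 by auto
          then show "((\<lambda>r. W ((r, ss), ts)) has_real_derivative E * ur y ts) (at y)"
            unfolding W_def E_def using dr tsI
            by (auto intro!: derivative_eq_intros)
        qed
        show "((\<lambda>r. E * ur r ts) has_real_derivative E * urr rs ts) (at rs)"
          using dr tsI rsI by (auto intro!: derivative_eq_intros)
      qed
      have sps: "(\<lambda>s. E * (- ur s ts) + \<epsilon>) ss = 0 \<and> E * (- urr ss ts) \<le> 0"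
      proof (rule second_deriv_max[of 0 ss rs "\<lambda>s. W ((rs, s), ts)"])
        show "0 < ss" "ss < rs" using ss0 ssr by auto
        show "\<forall>y. 0 < y \<and> y < rs \<longrightarrow> W ((rs, y), ts) \<le> W ((rs, ss), ts)"
        proof (intro allI impI)
          fix y assume "0 < y \<and> y < rs"
          then have "((rs, y), ts) \<in> ?S" using ts rs by auto
          then show "W ((rs, y), ts) \<le> W ((rs, ss), ts)" using p(2) pe by blast
        qed
        show "\<forall>y. 0 < y \<and> y < rs \<longrightarrow> ((\<lambda>s. W ((rs, s), ts)) has_real_derivative E * (- ur y ts) + \<epsilon>) (at y)"
        proof (intro allI impI)
          fix y assume y: "0 < y \<and> y < rs"
          then have "y \<in> {0<..<1}" using rs1 by auto
          then show "((\<lambda>s. W ((rs, s), ts)) has_real_derivative E * (- ur y ts) + \<epsilon>) (at y)"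
            unfolding W_def E_def using dr tsI
            by (auto intro!: derivative_eq_intros)
        qed
        show "((\<lambda>s. E * (- ur s ts) + \<epsilon>) has_real_derivative E * (- urr ss ts)) (at ss)"
          using dr tsI ssI by (auto intro!: derivative_eq_intros)
      qed
      have tm: "E * (- lam) * (u rs ts - u ss ts) + E * (ut rs ts - ut ss ts) \<ge> 0"
      proof (rule left_max_deriv[of "\<lambda>t. W ((rs, ss), t)" _ ts ts])
        show "((\<lambda>t. W ((rs, ss), t)) has_real_derivative
                E * (- lam) * (u rs ts - u ss ts) + E * (ut rs ts - ut ss ts)) (at ts)"
        proof -
          have dA: "(u rs has_real_derivative ut rs ts) (at ts)" using dr tsI rsI by auto
          have dB: "(u ss has_real_derivative ut ss ts) (at ts)" using dr tsI ssI by auto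
          show ?thesis unfolding W_def E_def
            by (auto intro!: derivative_eq_intros dA dB simp: algebra_simps)
        qed
        show "0 < ts" by (rule ts0)
        show "\<forall>s. ts - ts < s \<and> s < ts \<longrightarrow> W ((rs, ss), s) \<le> W ((rs, ss), ts)"
        proof (intro allI impI)
          fix s assume "ts - ts < s \<and> s < ts"
          then have "((rs, ss), s) \<in> ?S" using ts rs by auto
          then show "W ((rs, ss), s) \<le> W ((rs, ss), ts)" using p(2) pe by blast
        qed
      qed
      define Z where "Z = u rs ts - u ss ts"
      have "E * (ut rs ts - ut ss ts - lam * Z) \<ge> 0" using tm by (simp add: algebra_simps Z_def)
      then have "ut rs ts - ut ss ts - lam * Z \<ge> 0" using E by (simp add: zero_le_mult_iff)
      then have tmm: "ut rs ts - ut ss ts \<ge> lam * Z" by simp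
      have "E * Z > 0" using M WP sle unfolding Z_def by linarith
      then have Zp: "Z > 0" using E by (simp add: zero_less_mult_iff)
      have urr0: "ur rs ts = 0" "urr rs ts \<le> 0" using spr E by (auto simp: mult_le_0_iff)
      have urs: "ur ss ts > 0"
      proof -
        have "E * ur ss ts = \<epsilon>" using sps by simp
        then show ?thesis using E \<epsilon> by (metis zero_less_mult_iff less_asym)
      qed
      have urrs: "urr ss ts \<ge> 0" using sps E by (simp add: zero_le_mult_iff)
      have "ut rs ts - ut ss ts \<le> K * Z"
        using ineq tsI ss0 ssr rs1 Zp urr0 urs urrs unfolding Z_def by auto
      also have "\<dots> \<le> \<bar>K\<bar> * Z" using Zp by (simp add: mult_right_mono)
      finally have "lam * Z \<le> \<bar>K\<bar> * Z" using tmm by linarith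
      then show False using Zp unfolding lam_def by (simp add: algebra_simps)
    qed
    have "((r, s), t) \<in> ?S" using rt by auto
    then have "W ((r, s), t) \<le> W p" using p(2) by blast
    then have "W ((r, s), t) \<le> \<epsilon>" using Wp by linarith
    then show ?thesis by (simp add: W_def)
  qed
  show ?thesis
  proof (intro ballI allI impI)
    fix t r s :: real assume t: "t \<in> {0..t1}" and rs: "0 \<le> s \<and> s \<le> r \<and> r \<le> 1"
    show "u r t \<le> u s t"
    proof (rule ccontr)
      assume "\<not> u r t \<le> u s t"
      then have wp: "u r t - u s t > 0" by simp
      define E where "E = exp (- lam * t)"
      have E: "E > 0" by (simp add: E_def)
      define \<epsilon> where "\<epsilon> = E * (u r t - u s t) / 2"
      have ep: "\<epsilon> > 0" using E wp by (simp add: \<epsilon>_def)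
      have "E * (u r t - u s t) + \<epsilon> * s \<le> \<epsilon>" using main[OF ep _ _ _ t] rs by (simp add: E_def)
      moreover have "\<epsilon> * s \<ge> 0" using ep rs by simp
      ultimately show False using ep unfolding \<epsilon>_def by linarith
    qed
  qed
qed

lemma f1_zero_at0:
  fixes f1 f2 g :: "real \<Rightarrow> real" and \<kappa> D dd B0 B1 B2 :: real
  assumes kp: "\<kappa> > 0" and Dp: "D > 0" and dd: "dd \<ge> 1"
    and cf: "continuous_on {0..1} f1"
    and neg: "\<forall>r\<in>{0<..<1}. f1 r \<le> 0"
    and bd: "\<forall>r\<in>{0..1}. \<bar>f2 r\<bar> \<le> B2 \<and> \<bar>g r\<bar> \<le> B0 \<and> \<bar>f1 r\<bar> \<le> B1"
    and ineq: "\<forall>r\<in>{0<..<1}. \<kappa> * (f2 r + D / r * f1 r) + (1 / dd) * r * g r * f1 r + (g r)\<^sup>2 \<ge> 0"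
  shows "f1 0 = 0"
proof -
  have cont0: "\<forall>e>0. \<exists>\<delta>>0. \<forall>r\<in>{0..1}. dist r 0 < \<delta> \<longrightarrow> dist (f1 r) (f1 0) < e"
    using cf unfolding continuous_on_iff by (metis atLeastAtMost_iff order_refl zero_le_one)
  have le: "f1 0 \<le> 0"
  proof (rule ccontr)
    assume "\<not> f1 0 \<le> 0"
    then have pos: "f1 0 > 0" by simp
    obtain \<delta> where \<delta>: "\<delta> > 0" "\<forall>r\<in>{0..1}. dist r 0 < \<delta> \<longrightarrow> dist (f1 r) (f1 0) < f1 0"
      using cont0 pos by blast
    define r where "r = min \<delta> 1 / 2"
    have r: "0 < r" "r < 1" "r < \<delta>" using \<delta> unfolding r_def by (auto simp: min_def)
    then have "dist (f1 r) (f1 0) < f1 0" using \<delta> by (auto simp: dist_real_def)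
    moreover have "f1 r \<le> 0" using neg r by auto
    ultimately show False by (auto simp: dist_real_def)
  qed
  show ?thesis
  proof (rule ccontr)
    assume "f1 0 \<noteq> 0"
    then have a: "- f1 0 > 0" using le by simp
    define a where "a = - f1 0"
    have ap: "a > 0" using a by (simp add: a_def)
    obtain \<delta> where \<delta>: "\<delta> > 0" "\<forall>r\<in>{0..1}. dist r 0 < \<delta> \<longrightarrow> dist (f1 r) (f1 0) < a / 2"
      using cont0 ap by (metis half_gt_zero)
    define R where "R = \<kappa> * B2 + B0 * B1 + B0 * B0"
    define c where "c = \<kappa> * D * a / (2 * (\<bar>R\<bar> + 1))"
    have cp: "c > 0" unfolding c_def using kp Dp ap by (simp add: add_pos_nonneg)
    define r where "r = min (min \<delta> 1) c / 2"
    have r: "0 < r" "r < 1" "r < \<delta>" "r < c" using \<delta> cp unfolding r_def by (auto simp: min_def)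
    have r01: "r \<in> {0<..<1}" "r \<in> {0..1}" using r by auto
    have f1r: "f1 r < - a / 2"
    proof -
      have "dist (f1 r) (f1 0) < a / 2" using \<delta> r r01 by (auto simp: dist_real_def)
      then show ?thesis by (auto simp: dist_real_def a_def)
    qed
    have bds: "\<bar>f2 r\<bar> \<le> B2" "\<bar>g r\<bar> \<le> B0" "\<bar>f1 r\<bar> \<le> B1" using bd r01 by auto
    have t1: "\<kappa> * f2 r \<le> \<kappa> * B2" using bds kp by (simp add: abs_le_iff)
    have t2: "(1 / dd) * r * g r * f1 r \<le> B0 * B1"
    proof -
      have "\<bar>(1 / dd) * r * g r * f1 r\<bar> = (1/dd) * r * (\<bar>g r\<bar> * \<bar>f1 r\<bar>)"
        using dd r by (simp add: abs_mult)
      also have "\<dots> \<le> 1 * 1 * (\<bar>g r\<bar> * \<bar>f1 r\<bar>)"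
        using dd r by (intro mult_right_mono mult_mono) auto
      also have "\<dots> \<le> B0 * B1" using bds by (simp add: mult_mono')
      finally show ?thesis by linarith
    qed
    have t3: "(g r)\<^sup>2 \<le> B0 * B0"
    proof -
      have "\<bar>g r\<bar> * \<bar>g r\<bar> \<le> B0 * B0" using bds by (intro mult_mono) auto
      then show ?thesis by (simp add: power2_eq_square)
    qed
    have main: "\<kappa> * (D / r * f1 r) \<ge> - R"
      using ineq r01 t1 t2 t3 unfolding R_def by (smt (verit) distrib_left)
    have "\<kappa> * (D / r * f1 r) \<le> \<kappa> * (D / r * (- a / 2))"
      using f1r kp Dp r by (intro mult_left_mono) (auto simp: field_simps)
    also have "\<dots> = - (\<kappa> * D * a / (2 * r))" by (simp add: field_simps)
    also have "\<dots> < - (\<kappa> * D * a / (2 * c))"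
    proof -
      have "\<kappa> * D * a / (2 * c) < \<kappa> * D * a / (2 * r)"
        using r cp kp Dp ap by (intro divide_strict_left_mono) auto
      then show ?thesis by simp
    qed
    also have "\<kappa> * D * a / (2 * c) = \<bar>R\<bar> + 1"
      using kp Dp ap unfolding c_def by (simp add: field_simps)
    finally show False using main by linarith
  qed
qed

theorem lemma4p5:
  fixes d :: nat and \<Theta> T :: real
    and b0 :: "real \<Rightarrow> real" and b :: "real \<Rightarrow> real \<Rightarrow> real"
  assumes d_gt: "d > 2"
    and Theta_pos: "\<Theta> > 0"
    and T_pos: "T > 0"
    and b0_C2: "C2_01 b0"
    and b0_adm: "\<forall>r\<in>{0<..<1}. r / real d * deriv b0 r + b0 r \<ge> 0"
    and C1: "\<forall>r\<in>{0<..<1}. deriv b0 r \<le> 0"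
    and C2: "\<forall>r\<in>{0<..<1}.
               chi d * \<Theta> * (deriv (deriv b0) r + (real d + 1) / r * deriv b0 r)
               + (1 / real d) * r * b0 r * deriv b0 r + (b0 r)\<^sup>2 \<ge> 0"
    and sol: "classical_solution d \<Theta> b0 T b"
  shows "\<forall>r\<in>{0<..<1}. \<forall>t\<in>{0<..<T}.
           chi d * \<Theta> * (deriv (\<lambda>s. b s t) r)\<^sup>2 \<le> 2 / 3 * (b 0 t) ^ 3"
proof -
  obtain f1 f2 where
      df1: "\<forall>r\<in>{0..1}. (b0 has_real_derivative f1 r) (at r within {0..1})"
    and df2: "\<forall>r\<in>{0..1}. (f1 has_real_derivative f2 r) (at r within {0..1})"
    and cf2: "continuous_on {0..1} f2"
    using b0_C2 unfolding C2_01_def by blast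
  have contb: "continuous_on ({0..1} \<times> {0..<T}) (\<lambda>(r,t). b r t)"
    and b1: "\<forall>t\<in>{0..<T}. b 1 t = 1"
    and binit: "\<forall>r\<in>{0..1}. b r 0 = b0 r"
    using sol unfolding classical_solution_def by blast+
  obtain br brr bt where
      dbr: "\<forall>t\<in>{0<..<T}. \<forall>r\<in>{0..<1}. ((\<lambda>s. b s t) has_real_derivative br r t) (at r within {0..1})"
    and cbr: "continuous_on ({0..<1} \<times> {0<..<T}) (\<lambda>(r,t). br r t)"
    and dbrr: "\<forall>t\<in>{0<..<T}. \<forall>r\<in>{0<..<1}.
            ((\<lambda>s. br s t) has_real_derivative brr r t) (at r) \<and>
            ((\<lambda>\<tau>. b r \<tau>) has_real_derivative bt r t) (at t)"
    and pde: "\<forall>t\<in>{0<..<T}. \<forall>r\<in>{0<..<1}.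
            bt r t = chi d * \<Theta> * (brr r t + (real d + 1) / r * br r t)
                     + (1 / real d) * r * b r t * br r t + (b r t)\<^sup>2"
    and br0: "\<forall>t\<in>{0<..<T}. br 0 t = 0"
    using sol unfolding classical_solution_def by blast
  define \<kappa> where "\<kappa> = chi d * \<Theta>"
  have kp: "\<kappa> > 0" unfolding \<kappa>_def chi_def using Theta_pos by simp
  have dpos: "real d \<ge> 1" using d_gt by simp
  have b0d: "(b0 has_real_derivative f1 r) (at r)" if "r \<in> {0<..<1}" for r
    using deriv_at_interior[of b0 "f1 r" r] df1 that by auto
  have f1d: "(f1 has_real_derivative f2 r) (at r)" if "r \<in> {0<..<1}" for r
    using deriv_at_interior[of f1 "f2 r" r] df2 that by auto
  have derb0: "deriv b0 r = f1 r" if "r \<in> {0<..<1}" for r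
    using b0d[OF that] DERIV_imp_deriv by blast
  have derb0': "deriv (deriv b0) r = f2 r" if r: "r \<in> {0<..<1}" for r
  proof -
    have "(deriv b0 has_real_derivative f2 r) (at r)"
      by (rule has_field_derivative_transform_within_open[OF f1d[OF r] _ r])
         (auto simp: derb0)
    then show ?thesis by (rule DERIV_imp_deriv)
  qed
  have cb0: "continuous_on {0..1} b0" using df1 by (intro DERIV_continuous_on) auto
  have cf1: "continuous_on {0..1} f1" using df2 by (intro DERIV_continuous_on) auto
  have f1neg: "\<forall>r\<in>{0<..<1}. f1 r \<le> 0" using C1 derb0 by auto
  have C2': "\<forall>r\<in>{0<..<1}. \<kappa> * (f2 r + (real d + 1) / r * f1 r) + (1 / real d) * r * b0 r * f1 r + (b0 r)\<^sup>2 \<ge> 0"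
    using C2 derb0 derb0' unfolding \<kappa>_def by auto
  have f10: "f1 0 = 0"
  proof -
    obtain B2 where B2: "\<forall>r\<in>{0..1}. \<bar>f2 r\<bar> \<le> B2" using bound_compact[OF _ cf2] by auto
    obtain B0 where B0: "\<forall>r\<in>{0..1}. \<bar>b0 r\<bar> \<le> B0" using bound_compact[OF _ cb0] by auto
    obtain B1 where B1: "\<forall>r\<in>{0..1}. \<bar>f1 r\<bar> \<le> B1" using bound_compact[OF _ cf1] by auto
    show ?thesis
      by (rule f1_zero_at0[OF kp _ dpos cf1 f1neg _ C2', of B2 B0 B1]) (use B0 B1 B2 in auto)
  qed
  have b0mono: "b0 r \<le> b0 s" if "0 \<le> s" "s \<le> r" "r \<le> 1" for r s
  proof (rule DERIV_nonpos_imp_decreasing_open[OF that(2)])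
    fix x assume "s < x" "x < r"
    then show "\<exists>y. (b0 has_real_derivative y) (at x) \<and> y \<le> 0"
      using b0d f1neg that by (intro exI[of _ "f1 x"]) auto
  next
    show "continuous_on {s..r} b0" using that by (intro continuous_on_subset[OF cb0]) auto
  qed
  have b01: "b0 1 = 1" using b1[rule_format, of 0] binit[rule_format, of 1] T_pos by simp
  have b0ge: "b0 r \<ge> 1" if "r \<in> {0..1}" for r using b0mono[of r 1] that b01 by auto
  have cbsub: "continuous_on ({0..1} \<times> {0..t1}) (\<lambda>p. b (fst p) (snd p))" if "t1 < T" for t1
  proof -
    have cu: "continuous_on ({0..1} \<times> {0..<T}) (\<lambda>p. b (fst p) (snd p))" using contb by (simp add: case_prod_beta')
    show ?thesis by (rule continuous_on_subset[OF cu]) (use that in auto)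
  qed
  have bslice: "continuous_on {0..1} (\<lambda>r. b r t)" if "t \<in> {0..<T}" for t
  proof -
    have "continuous_on {0..1} ((\<lambda>p. b (fst p) (snd p)) \<circ> (\<lambda>r. (r, t)))"
    proof -
      have cu: "continuous_on ({0..1} \<times> {0..<T}) (\<lambda>p. b (fst p) (snd p))" using contb by (simp add: case_prod_beta')
      show ?thesis using that by (intro continuous_on_compose continuous_intros continuous_on_subset[OF cu]) auto
    qed
    then show ?thesis by (simp add: o_def)
  qed
  have bdr: "((\<lambda>s. b s t) has_real_derivative br r t) (at r)" if "t \<in> {0<..<T}" "r \<in> {0<..<1}" for r t
    using deriv_at_interior[of "\<lambda>s. b s t" "br r t" r] dbr that by auto
  have bdrr: "((\<lambda>s. br s t) has_real_derivative brr r t) (at r)" if "t \<in> {0<..<T}" "r \<in> {0<..<1}" for r t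
    using dbrr that by auto
  have bdt: "((\<lambda>\<tau>. b r \<tau>) has_real_derivative bt r t) (at t)" if "t \<in> {0<..<T}" "r \<in> {0<..<1}" for r t
    using dbrr that by auto
  have bgeb0: "b0 r \<le> b r t" if t: "t \<in> {0..<T}" and r: "r \<in> {0..1}" for r t
  proof -
    define t1 where "t1 = t"
    have t1: "0 \<le> t1" "t1 < T" using t by (auto simp: t1_def)
    have cb1: "continuous_on ({0..1} \<times> {0..t1}) (\<lambda>p. b (fst p) (snd p))" using cbsub t1 by auto
    obtain Kb where Kb: "\<forall>p\<in>{0..1} \<times> {0..t1}. \<bar>b (fst p) (snd p)\<bar> \<le> Kb"
      using bound_compact[OF _ cb1] by (auto simp: compact_Times)
    obtain K1 where K1: "\<forall>r\<in>{0..1}. \<bar>f1 r\<bar> \<le> K1" using bound_compact[OF _ cf1] by auto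
    have Kb': "\<bar>b r t\<bar> \<le> Kb" if "r \<in> {0..1}" "t \<in> {0..t1}" for r t using Kb that by force
    have res: "\<forall>r\<in>{0..1}. \<forall>t\<in>{0..t1}. (\<lambda>r t. b0 r - b r t) r t \<le> 0"
    proof (rule maxprin1[where wr = "\<lambda>r t. f1 r - br r t" and wrr = "\<lambda>r t. f2 r - brr r t"
                          and wt = "\<lambda>r t. - bt r t" and C = "K1 + 2 * Kb" and K = Kb])
      show "0 \<le> t1" by (rule t1(1))
      have "continuous_on ({0..1} \<times> {0..t1}) (\<lambda>p. b0 (fst p))"
        by (rule continuous_on_compose2[OF cb0]) (auto intro: continuous_intros)
      then have "continuous_on ({0..1} \<times> {0..t1}) (\<lambda>p. b0 (fst p) - b (fst p) (snd p))"
        by (intro continuous_intros cb1)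
      then show "continuous_on ({0..1} \<times> {0..t1}) (\<lambda>(r, t). b0 r - b r t)"
        by (simp add: case_prod_beta')
      show "\<forall>r\<in>{0..1}. b0 r - b r 0 \<le> 0" using binit by auto
      show "\<forall>t\<in>{0..t1}. b0 1 - b 1 t \<le> 0" using b1 b01 t1 by auto
      show "\<forall>t\<in>{0<..t1}. ((\<lambda>r. b0 r - b r t) has_real_derivative f1 0 - br 0 t) (at 0 within {0..1}) \<and>
               0 \<le> f1 0 - br 0 t"
      proof (intro ballI conjI)
        fix t :: real assume t: "t \<in> {0<..t1}"
        have tT: "t \<in> {0<..<T}" using t t1 by auto
        have a1: "(b0 has_real_derivative f1 0) (at 0 within {0..1})" using df1 by auto
        have a2: "((\<lambda>s. b s t) has_real_derivative br 0 t) (at 0 within {0..1})" using dbr tT by auto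
        show "((\<lambda>r. b0 r - b r t) has_real_derivative f1 0 - br 0 t) (at 0 within {0..1})"
          by (rule DERIV_diff[OF a1 a2])
        show "0 \<le> f1 0 - br 0 t" using br0 tT f10 by auto
      qed
      show "\<forall>t\<in>{0<..t1}. \<forall>r\<in>{0<..<1}. ((\<lambda>r. b0 r - b r t) has_real_derivative f1 r - br r t) (at r) \<and>
               ((\<lambda>r. f1 r - br r t) has_real_derivative f2 r - brr r t) (at r) \<and>
               ((\<lambda>\<tau>. b0 r - b r \<tau>) has_real_derivative - bt r t) (at t)"
      proof (intro ballI conjI)
        fix t r :: real assume t: "t \<in> {0<..t1}" and r: "r \<in> {0<..<1}"
        have tT: "t \<in> {0<..<T}" using t t1 by auto
        show "((\<lambda>r. b0 r - b r t) has_real_derivative f1 r - br r t) (at r)"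
          using b0d[OF r] bdr[OF tT r] by (auto intro!: derivative_eq_intros)
        show "((\<lambda>r. f1 r - br r t) has_real_derivative f2 r - brr r t) (at r)"
          using f1d[OF r] bdrr[OF tT r] by (auto intro!: derivative_eq_intros)
        show "((\<lambda>\<tau>. b0 r - b r \<tau>) has_real_derivative - bt r t) (at t)"
          using bdt[OF tT r] by (auto intro!: derivative_eq_intros)
      qed
      show "\<forall>t\<in>{0<..t1}. \<forall>r\<in>{0<..<1}. 0 < b0 r - b r t \<longrightarrow> f1 r - br r t \<le> 0 \<longrightarrow> f2 r - brr r t \<le> 0 \<longrightarrow>
               - bt r t \<le> (K1 + 2 * Kb) * (b0 r - b r t) + Kb * \<bar>f1 r - br r t\<bar>"
      proof (intro ballI impI)
        fix t r :: real assume t: "t \<in> {0<..t1}" and r: "r \<in> {0<..<1}"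
          and wp: "0 < b0 r - b r t" and W: "f1 r - br r t \<le> 0" and V: "f2 r - brr r t \<le> 0"
        have tT: "t \<in> {0<..<T}" using t t1 by auto
        define B where "B = b r t"
        define w where "w = b0 r - B"
        define WW where "WW = f1 r - br r t"
        define VV where "VV = f2 r - brr r t"
        define E2 where "E2 = \<kappa> * (f2 r + (real d + 1) / r * f1 r) + (1 / real d) * r * b0 r * f1 r + (b0 r)\<^sup>2"
        have E2: "E2 \<ge> 0" using C2' r unfolding E2_def by auto
        have eq: "- bt r t = - E2 + w * ((1 / real d) * r * f1 r + b0 r + B) + \<kappa> * VV
                    + \<kappa> * ((real d + 1) / r) * WW + (1 / real d) * r * B * WW"
        proof -
          have "bt r t = \<kappa> * (brr r t + (real d + 1) / r * br r t) + (1 / real d) * r * b r t * br r t + (b r t)\<^sup>2"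
            using pde tT r unfolding \<kappa>_def by auto
          then have "bt r t = \<kappa> * (brr r t + ((real d + 1) / r) * br r t) + (1 / real d) * r * b r t * br r t + (b r t)\<^sup>2"
            by simp
          then show ?thesis unfolding E2_def w_def VV_def WW_def B_def
            by (simp only: algebra_simps power2_eq_square)
        qed
        have r01: "r \<in> {0..1}" using r by auto
        have hB: "\<bar>B\<bar> \<le> Kb" unfolding B_def using Kb' r01 t by auto
        have hb0: "\<bar>b0 r\<bar> \<le> Kb" using Kb'[of r 0] binit r01 t1 by auto
        have hf1: "\<bar>f1 r\<bar> \<le> K1" using K1 r01 by auto
        have i1: "\<kappa> * VV \<le> 0" using kp V unfolding VV_def by (simp add: mult_nonneg_nonpos)
        have i2: "\<kappa> * ((real d + 1) / r) * WW \<le> 0" using kp W r unfolding WW_def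
          by (intro mult_nonneg_nonpos) auto
        have i3: "(1 / real d) * r * B * WW \<le> Kb * \<bar>WW\<bar>"
        proof -
          have "(1 / real d) * r * B * WW \<le> \<bar>(1 / real d) * r * B * WW\<bar>" by (rule abs_ge_self)
          also have "\<dots> = ((1 / real d) * r) * (\<bar>B\<bar> * \<bar>WW\<bar>)" using r dpos by (simp add: abs_mult)
          also have "\<dots> \<le> 1 * (\<bar>B\<bar> * \<bar>WW\<bar>)"
            using r dpos by (intro mult_right_mono) (auto simp: field_simps)
          also have "\<dots> \<le> Kb * \<bar>WW\<bar>" using hB by (simp add: mult_right_mono)
          finally show ?thesis .
        qed
        have i4: "w * ((1 / real d) * r * f1 r + b0 r + B) \<le> (K1 + 2 * Kb) * w"
        proof -
          have "\<bar>(1 / real d) * r * f1 r\<bar> \<le> K1"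
          proof -
            have "\<bar>(1 / real d) * r * f1 r\<bar> = ((1 / real d) * r) * \<bar>f1 r\<bar>" using r dpos by (simp add: abs_mult)
            also have "\<dots> \<le> 1 * \<bar>f1 r\<bar>" using r dpos by (intro mult_right_mono) (auto simp: field_simps)
            finally show ?thesis using hf1 by linarith
          qed
          then have "(1 / real d) * r * f1 r + b0 r + B \<le> K1 + 2 * Kb" using hb0 hB by linarith
          then have "w * ((1 / real d) * r * f1 r + b0 r + B) \<le> w * (K1 + 2 * Kb)"
            using wp unfolding w_def B_def by (intro mult_left_mono) auto
          then show ?thesis by (simp add: mult.commute)
        qed
        show "- bt r t \<le> (K1 + 2 * Kb) * (b0 r - b r t) + Kb * \<bar>f1 r - br r t\<bar>"
        proof -
          have "- bt r t \<le> (K1 + 2 * Kb) * w + Kb * \<bar>WW\<bar>" using eq E2 i1 i2 i3 i4 by linarith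
          then show ?thesis unfolding w_def B_def WW_def .
        qed
      qed
    qed
    then show ?thesis using r t by (auto simp: t1_def)
  qed
  have bmono: "b r t \<le> b s t" if t: "t \<in> {0..<T}" and rs: "0 \<le> s" "s \<le> r" "r \<le> 1" for r s t
  proof -
    define t1 where "t1 = t"
    have t1: "0 \<le> t1" "t1 < T" using t by (auto simp: t1_def)
    have cb1: "continuous_on ({0..1} \<times> {0..t1}) (\<lambda>p. b (fst p) (snd p))" using cbsub t1 by auto
    obtain Kb where Kb: "\<forall>p\<in>{0..1} \<times> {0..t1}. \<bar>b (fst p) (snd p)\<bar> \<le> Kb"
      using bound_compact[OF _ cb1] by (auto simp: compact_Times)
    have Kb': "\<bar>b r t\<bar> \<le> Kb" if "r \<in> {0..1}" "t \<in> {0..t1}" for r t using Kb that by force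
    have res: "\<forall>t\<in>{0..t1}. \<forall>r s. 0 \<le> s \<and> s \<le> r \<and> r \<le> 1 \<longrightarrow> b r t \<le> b s t"
    proof (rule maxprin2[where ur = br and urr = brr and ut = bt and K = "2 * Kb"])
      show "0 \<le> t1" by (rule t1(1))
      show "continuous_on ({0..1} \<times> {0..t1}) (\<lambda>(r, t). b r t)" using cb1 by (simp add: case_prod_beta')
      show "\<forall>r s. 0 \<le> s \<and> s \<le> r \<and> r \<le> 1 \<longrightarrow> b r 0 \<le> b s 0"
        using binit b0mono by auto
      show "\<forall>t\<in>{0..t1}. \<forall>s\<in>{0..1}. b 1 t \<le> b s t"
      proof (intro ballI)
        fix t s :: real assume t: "t \<in> {0..t1}" and s: "s \<in> {0..1}"
        have "b 1 t = 1" using b1 t t1 by auto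
        also have "1 \<le> b0 s" using b0ge s by auto
        also have "b0 s \<le> b s t" using bgeb0 s t t1 by auto
        finally show "b 1 t \<le> b s t" .
      qed
      show "\<forall>t\<in>{0<..t1}. ((\<lambda>r. b r t) has_real_derivative br 0 t) (at 0 within {0..1}) \<and> br 0 t = 0"
      proof (intro ballI conjI)
        fix t :: real assume "t \<in> {0<..t1}"
        then have tT: "t \<in> {0<..<T}" using t1 by auto
        show "((\<lambda>r. b r t) has_real_derivative br 0 t) (at 0 within {0..1})" using dbr tT by auto
        show "br 0 t = 0" using br0 tT by auto
      qed
      show "\<forall>t\<in>{0<..t1}. \<forall>r\<in>{0<..<1}. ((\<lambda>r. b r t) has_real_derivative br r t) (at r) \<and>
              ((\<lambda>r. br r t) has_real_derivative brr r t) (at r) \<and> ((\<lambda>\<tau>. b r \<tau>) has_real_derivative bt r t) (at t)"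
        using bdr bdrr bdt t1 by auto
      show "\<forall>t\<in>{0<..t1}. \<forall>r s. 0 < s \<and> s < r \<and> r < 1 \<longrightarrow> b s t < b r t \<longrightarrow> br r t = 0 \<longrightarrow>
              brr r t \<le> 0 \<longrightarrow> 0 < br s t \<longrightarrow> 0 \<le> brr s t \<longrightarrow> bt r t - bt s t \<le> 2 * Kb * (b r t - b s t)"
      proof (intro ballI allI impI)
        fix t r s :: real assume t: "t \<in> {0<..t1}" and rs: "0 < s \<and> s < r \<and> r < 1"
          and lt: "b s t < b r t" and brz: "br r t = 0" and brrr: "brr r t \<le> 0"
          and brs: "0 < br s t" and brrs: "0 \<le> brr s t"
        have tT: "t \<in> {0<..<T}" using t t1 by auto
        have rI: "r \<in> {0<..<1}" and sI: "s \<in> {0<..<1}" using rs by auto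
        have e1: "bt r t = \<kappa> * brr r t + (b r t)\<^sup>2"
          using pde tT rI brz unfolding \<kappa>_def by auto
        have e2: "bt s t = \<kappa> * (brr s t + (real d + 1) / s * br s t) + (1 / real d) * s * b s t * br s t + (b s t)\<^sup>2"
          using pde tT sI unfolding \<kappa>_def by auto
        have bs1: "b s t \<ge> 1" using bgeb0[of t s] b0ge[of s] tT sI by auto
        have g1: "\<kappa> * brr r t \<le> 0" using kp brrr by (simp add: mult_nonneg_nonpos)
        have g2: "\<kappa> * (brr s t + (real d + 1) / s * br s t) \<ge> 0"
          using kp brrs brs rs by (intro mult_nonneg_nonneg add_nonneg_nonneg) auto
        have g3: "(1 / real d) * s * b s t * br s t \<ge> 0"
          using rs bs1 brs dpos by (intro mult_nonneg_nonneg) auto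
        have "bt r t - bt s t \<le> (b r t)\<^sup>2 - (b s t)\<^sup>2" using e1 e2 g1 g2 g3 by linarith
        also have "\<dots> = (b r t + b s t) * (b r t - b s t)" by (simp add: power2_eq_square algebra_simps)
        also have "\<dots> \<le> (2 * Kb) * (b r t - b s t)"
        proof (rule mult_right_mono)
          have "\<bar>b r t\<bar> \<le> Kb" "\<bar>b s t\<bar> \<le> Kb" using Kb' rs t by auto
          then show "b r t + b s t \<le> 2 * Kb" by linarith
          show "0 \<le> b r t - b s t" using lt by simp
        qed
        finally show "bt r t - bt s t \<le> 2 * Kb * (b r t - b s t)" .
      qed
    qed
    then show ?thesis using rs t by (auto simp: t1_def)
  qed
  have brneg: "br r t \<le> 0" if t: "t \<in> {0<..<T}" and r: "r \<in> {0<..<1}" for r t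
  proof (rule ccontr)
    assume "\<not> br r t \<le> 0"
    then have "br r t > 0" by simp
    from DERIV_pos_inc_right[OF bdr[OF t r] this] obtain \<delta> where
      \<delta>: "\<delta> > 0" "\<forall>h>0. h < \<delta> \<longrightarrow> b r t < b (r + h) t" by blast
    define h where "h = min \<delta> (1 - r) / 2"
    have h: "h > 0" "h < \<delta>" "r + h \<le> 1" using \<delta> r unfolding h_def by (auto simp: min_def field_simps)
    have "b r t < b (r + h) t" using \<delta> h by auto
    moreover have "b (r + h) t \<le> b r t" using bmono[of t r "r + h"] t r h by auto
    ultimately show False by simp
  qed
  have btmono: "b r t \<le> b r (t + h)" if h: "h > 0" and t: "0 \<le> t" "t + h < T" and r: "r \<in> {0..1}" for r t h
  proof -
    define t1 where "t1 = t"
    have t1: "0 \<le> t1" "t1 + h < T" "t1 < T" using t h by (auto simp: t1_def)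
    have cb1: "continuous_on ({0..1} \<times> {0..t1 + h}) (\<lambda>p. b (fst p) (snd p))" using cbsub t1 by auto
    obtain Kb where Kb: "\<forall>p\<in>{0..1} \<times> {0..t1 + h}. \<bar>b (fst p) (snd p)\<bar> \<le> Kb"
      using bound_compact[OF _ cb1] by (auto simp: compact_Times)
    have Kb': "\<bar>b r t\<bar> \<le> Kb" if "r \<in> {0..1}" "t \<in> {0..t1 + h}" for r t using Kb that by force
    have res: "\<forall>r\<in>{0..1}. \<forall>t\<in>{0..t1}. (\<lambda>r t. b r t - b r (t + h)) r t \<le> 0"
    proof (rule maxprin1[where wr = "\<lambda>r t. br r t - br r (t + h)" and wrr = "\<lambda>r t. brr r t - brr r (t + h)"
                          and wt = "\<lambda>r t. bt r t - bt r (t + h)" and C = "2 * Kb" and K = Kb])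
      show "0 \<le> t1" by (rule t1(1))
      have ca: "continuous_on ({0..1} \<times> {0..t1}) (\<lambda>p. b (fst p) (snd p))"
        by (rule continuous_on_subset[OF cb1]) (use h in auto)
      have cc: "continuous_on ({0..1} \<times> {0..t1}) ((\<lambda>p. b (fst p) (snd p)) \<circ> (\<lambda>p. (fst p, snd p + h)))"
        by (intro continuous_on_compose continuous_intros continuous_on_subset[OF cb1]) (use h in auto)
      have "continuous_on ({0..1} \<times> {0..t1}) (\<lambda>p. b (fst p) (snd p) - b (fst p) (snd p + h))"
        using continuous_on_diff[OF ca cc] by (simp add: o_def)
      then show "continuous_on ({0..1} \<times> {0..t1}) (\<lambda>(r, t). b r t - b r (t + h))"
        by (simp add: case_prod_beta')
      show "\<forall>r\<in>{0..1}. b r 0 - b r (0 + h) \<le> 0"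
        using binit bgeb0 h t1 by auto
      show "\<forall>t\<in>{0..t1}. b 1 t - b 1 (t + h) \<le> 0" using b1 t1 h by auto
      show "\<forall>t\<in>{0<..t1}. ((\<lambda>r. b r t - b r (t + h)) has_real_derivative br 0 t - br 0 (t + h)) (at 0 within {0..1}) \<and>
               0 \<le> br 0 t - br 0 (t + h)"
      proof (intro ballI conjI)
        fix t :: real assume t: "t \<in> {0<..t1}"
        have tT: "t \<in> {0<..<T}" "t + h \<in> {0<..<T}" using t t1 h by auto
        have a1: "((\<lambda>s. b s t) has_real_derivative br 0 t) (at 0 within {0..1})" using dbr tT by auto
        have a2: "((\<lambda>s. b s (t + h)) has_real_derivative br 0 (t + h)) (at 0 within {0..1})" using dbr tT by auto
        show "((\<lambda>r. b r t - b r (t + h)) has_real_derivative br 0 t - br 0 (t + h)) (at 0 within {0..1})"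
          by (rule DERIV_diff[OF a1 a2])
        show "0 \<le> br 0 t - br 0 (t + h)" using br0 tT by auto
      qed
      show "\<forall>t\<in>{0<..t1}. \<forall>r\<in>{0<..<1}. ((\<lambda>r. b r t - b r (t + h)) has_real_derivative br r t - br r (t + h)) (at r) \<and>
               ((\<lambda>r. br r t - br r (t + h)) has_real_derivative brr r t - brr r (t + h)) (at r) \<and>
               ((\<lambda>\<tau>. b r \<tau> - b r (\<tau> + h)) has_real_derivative bt r t - bt r (t + h)) (at t)"
      proof (intro ballI conjI)
        fix t r :: real assume t: "t \<in> {0<..t1}" and r: "r \<in> {0<..<1}"
        have tT: "t \<in> {0<..<T}" "t + h \<in> {0<..<T}" using t t1 h by auto
        show "((\<lambda>r. b r t - b r (t + h)) has_real_derivative br r t - br r (t + h)) (at r)"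
          by (rule DERIV_diff[OF bdr[OF tT(1) r] bdr[OF tT(2) r]])
        show "((\<lambda>r. br r t - br r (t + h)) has_real_derivative brr r t - brr r (t + h)) (at r)"
          by (rule DERIV_diff[OF bdrr[OF tT(1) r] bdrr[OF tT(2) r]])
        have sh: "((\<lambda>\<tau>. b r (\<tau> + h)) has_real_derivative bt r (t + h)) (at t)"
          using bdt[OF tT(2) r] DERIV_shift[of "\<lambda>\<tau>. b r \<tau>" "bt r (t + h)" t h] by simp
        show "((\<lambda>\<tau>. b r \<tau> - b r (\<tau> + h)) has_real_derivative bt r t - bt r (t + h)) (at t)"
          by (rule DERIV_diff[OF bdt[OF tT(1) r] sh])
      qed
      show "\<forall>t\<in>{0<..t1}. \<forall>r\<in>{0<..<1}. 0 < b r t - b r (t + h) \<longrightarrow> br r t - br r (t + h) \<le> 0 \<longrightarrow>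
               brr r t - brr r (t + h) \<le> 0 \<longrightarrow>
               bt r t - bt r (t + h) \<le> 2 * Kb * (b r t - b r (t + h)) + Kb * \<bar>br r t - br r (t + h)\<bar>"
      proof (intro ballI impI)
        fix t r :: real assume t: "t \<in> {0<..t1}" and r: "r \<in> {0<..<1}"
          and wp: "0 < b r t - b r (t + h)" and W: "br r t - br r (t + h) \<le> 0"
          and V: "brr r t - brr r (t + h) \<le> 0"
        have tT: "t \<in> {0<..<T}" "t + h \<in> {0<..<T}" using t t1 h by auto
        define u2 where "u2 = b r t"
        define u1 where "u1 = b r (t + h)"
        define p2 where "p2 = br r t"
        define p1 where "p1 = br r (t + h)"
        define q2 where "q2 = brr r t"
        define q1 where "q1 = brr r (t + h)"
        define A where "A = (real d + 1) / r"
        define c where "c = 1 / real d"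
        have e2: "bt r t = \<kappa> * (q2 + A * p2) + c * r * u2 * p2 + u2\<^sup>2"
          using pde tT(1) r unfolding \<kappa>_def u2_def p2_def q2_def A_def c_def by auto
        have e1: "bt r (t + h) = \<kappa> * (q1 + A * p1) + c * r * u1 * p1 + u1\<^sup>2"
          using pde tT(2) r unfolding \<kappa>_def u1_def p1_def q1_def A_def c_def by auto
        have eq: "bt r t - bt r (t + h) = \<kappa> * (q2 - q1) + \<kappa> * A * (p2 - p1) + c * r * u2 * (p2 - p1)
                  + c * r * p1 * (u2 - u1) + (u2 + u1) * (u2 - u1)"
          unfolding e1 e2 by (simp add: algebra_simps power2_eq_square)
        have Ap: "A > 0" using r unfolding A_def by auto
        have cr: "0 < c * r" "c * r \<le> 1" using r dpos unfolding c_def by (auto simp: field_simps)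
        have r01: "r \<in> {0..1}" using r by auto
        have hu2: "\<bar>u2\<bar> \<le> Kb" using Kb' r01 t h unfolding u2_def by auto
        have hu1: "\<bar>u1\<bar> \<le> Kb" using Kb' r01 t h unfolding u1_def by auto
        have p1n: "p1 \<le> 0" using brneg tT(2) r unfolding p1_def by auto
        have w: "u2 - u1 > 0" using wp unfolding u1_def u2_def by simp
        have j1: "\<kappa> * (q2 - q1) \<le> 0" using kp V unfolding q1_def q2_def by (simp add: mult_nonneg_nonpos)
        have j2: "\<kappa> * A * (p2 - p1) \<le> 0" using kp Ap W unfolding p1_def p2_def
          by (intro mult_nonneg_nonpos) auto
        have j3: "c * r * u2 * (p2 - p1) \<le> Kb * \<bar>p2 - p1\<bar>"
        proof -
          have "c * r * u2 * (p2 - p1) \<le> \<bar>c * r * u2 * (p2 - p1)\<bar>" by (rule abs_ge_self)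
          also have "\<dots> = \<bar>c * r\<bar> * (\<bar>u2\<bar> * \<bar>p2 - p1\<bar>)" by (metis abs_mult mult.assoc)
          also have "\<dots> = (c * r) * (\<bar>u2\<bar> * \<bar>p2 - p1\<bar>)" using cr by simp
          also have "\<dots> \<le> 1 * (\<bar>u2\<bar> * \<bar>p2 - p1\<bar>)" using cr by (intro mult_right_mono) auto
          also have "\<dots> \<le> Kb * \<bar>p2 - p1\<bar>" using hu2 by (simp add: mult_right_mono)
          finally show ?thesis .
        qed
        have j4: "c * r * p1 * (u2 - u1) \<le> 0"
          using cr p1n w by (simp add: mult_nonneg_nonpos mult_nonpos_nonneg)
        have j5: "(u2 + u1) * (u2 - u1) \<le> (2 * Kb) * (u2 - u1)"
          using hu1 hu2 w by (intro mult_right_mono) auto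
        have "bt r t - bt r (t + h) \<le> 2 * Kb * (u2 - u1) + Kb * \<bar>p2 - p1\<bar>"
          using eq j1 j2 j3 j4 j5 by linarith
        then show "bt r t - bt r (t + h) \<le> 2 * Kb * (b r t - b r (t + h)) + Kb * \<bar>br r t - br r (t + h)\<bar>"
          unfolding u1_def u2_def p1_def p2_def .
      qed
    qed
    then show ?thesis using r t by (auto simp: t1_def)
  qed
  have btpos: "bt r t \<ge> 0" if t: "t \<in> {0<..<T}" and r: "r \<in> {0<..<1}" for r t
  proof (rule ccontr)
    assume "\<not> bt r t \<ge> 0"
    then have "bt r t < 0" by simp
    from DERIV_neg_dec_right[OF bdt[OF t r] this] obtain \<delta> where
      \<delta>: "\<delta> > 0" "\<forall>h>0. h < \<delta> \<longrightarrow> b r t > b r (t + h)" by blast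
    define h where "h = min \<delta> (T - t) / 2"
    have h: "h > 0" "h < \<delta>" "t + h < T" using \<delta> t unfolding h_def by (auto simp: min_def field_simps)
    have "b r t > b r (t + h)" using \<delta> h by auto
    moreover have "b r t \<le> b r (t + h)" using btmono[of h t r] t r h by auto
    ultimately show False by simp
  qed
  show ?thesis
  proof (intro ballI)
    fix r0 t :: real assume r0: "r0 \<in> {0<..<1}" and t: "t \<in> {0<..<T}"
    define g where "g = (\<lambda>r. \<kappa> / 2 * (br r t)\<^sup>2 + (b r t) ^ 3 / 3)"
    have cbrt: "continuous_on {0..r0} (\<lambda>r. br r t)"
    proof -
      have cu: "continuous_on ({0..<1} \<times> {0<..<T}) (\<lambda>p. br (fst p) (snd p))" using cbr by (simp add: case_prod_beta')
      have "continuous_on {0..r0} ((\<lambda>p. br (fst p) (snd p)) \<circ> (\<lambda>r. (r, t)))"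
        using r0 t by (intro continuous_on_compose continuous_intros continuous_on_subset[OF cu]) auto
      then show ?thesis by (simp add: o_def)
    qed
    have cbt: "continuous_on {0..r0} (\<lambda>r. b r t)"
      by (rule continuous_on_subset[OF bslice[of t]]) (use t r0 in auto)
    have cg: "continuous_on {0..r0} g" unfolding g_def
      by (intro continuous_intros cbrt cbt) auto
    have "g 0 \<ge> g r0"
    proof (rule DERIV_nonpos_imp_decreasing_open[of 0 r0 g])
      show "0 \<le> r0" using r0 by simp
      show "continuous_on {0..r0} g" by (rule cg)
      fix x assume x: "0 < x" "x < r0"
      have xI: "x \<in> {0<..<1}" using x r0 by auto
      have d1: "((\<lambda>s. b s t) has_real_derivative br x t) (at x)" by (rule bdr[OF t xI])
      have d2: "((\<lambda>s. br s t) has_real_derivative brr x t) (at x)" by (rule bdrr[OF t xI])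
      have dg: "(g has_real_derivative br x t * (\<kappa> * brr x t + (b x t)\<^sup>2)) (at x)"
        unfolding g_def
        by (auto intro!: derivative_eq_intros d1 d2 simp: algebra_simps power2_eq_square)
      have bpde: "bt x t = \<kappa> * (brr x t + (real d + 1) / x * br x t) + (1 / real d) * x * b x t * br x t + (b x t)\<^sup>2"
        using pde t xI unfolding \<kappa>_def by auto
      have brn: "br x t \<le> 0" by (rule brneg[OF t xI])
      have bx1: "b x t \<ge> 1" using bgeb0[of t x] b0ge[of x] t xI by auto
      have k1: "\<kappa> * ((real d + 1) / x * br x t) \<le> 0"
        using kp x brn by (intro mult_nonneg_nonpos) (auto intro!: mult_nonneg_nonpos)
      have k2: "(1 / real d) * x * b x t * br x t \<le> 0"
        using x bx1 brn dpos by (intro mult_nonneg_nonpos) auto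
      have "\<kappa> * brr x t + (b x t)\<^sup>2 \<ge> 0"
        using bpde btpos[OF t xI] k1 k2 by (simp add: algebra_simps)
      then have "br x t * (\<kappa> * brr x t + (b x t)\<^sup>2) \<le> 0" using brn by (simp add: mult_nonpos_nonneg)
      then show "\<exists>y. (g has_real_derivative y) (at x) \<and> y \<le> 0" using dg by blast
    qed
    moreover have "g 0 = (b 0 t) ^ 3 / 3" using br0 t unfolding g_def by simp
    moreover have "g r0 = \<kappa> / 2 * (br r0 t)\<^sup>2 + (b r0 t) ^ 3 / 3" unfolding g_def by simp
    ultimately have a: "\<kappa> / 2 * (br r0 t)\<^sup>2 + (b r0 t) ^ 3 / 3 \<le> (b 0 t) ^ 3 / 3"
      by linarith
    have "b r0 t \<ge> 1" using bgeb0[of t r0] b0ge[of r0] t r0 by auto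
    then have c3: "(b r0 t) ^ 3 \<ge> 0" by simp
    have dd: "deriv (\<lambda>s. b s t) r0 = br r0 t" using bdr[OF t r0] by (rule DERIV_imp_deriv)
    have "\<kappa> * (br r0 t)\<^sup>2 \<le> 2 / 3 * (b 0 t) ^ 3" using a c3 by linarith
    then show "chi d * \<Theta> * (deriv (\<lambda>s. b s t) r0)\<^sup>2 \<le> 2 / 3 * b 0 t ^ 3"
      unfolding dd \<kappa>_def .
  qed
qed

end
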